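(* Let $m,n\ge 1$. There exist a constant tensor $\mathbf W=(w_{ijk})\in\mathbb R^{m\times n\times mn}$ and a constant matrix $\mathbf Q\in\mathbb R^{n\times mn}$ such that for every entrywise non-negative matrix $\mathbf X=(x_{ij})\in\mathbb R_{\ge 0}^{m\times n}$ the following holds: defining $y_{ik}=\sum_{j=1}^n x_{ij}w_{ijk}$ for $i\in\{1,\dots,m\}$, $k\in\{1,\dots,mn\}$, and $\hat y_k=\max_{1\le i\le m}y_{ik}$, we have $$\Big(\sum_{i=1}^m x_{ij}\Big)_{j=1}^n=\mathbf Q\,(\hat y_k)_{k=1}^{mn}.$$
   Context: $\mathbf W$ and $\mathbf Q$ do not depend on $\mathbf X$; they depend only on $m$ and $n$. *)

theory Defs
  imports "HOL-Analysis.Analysis"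
begin

end

theory Submission
  imports Defs
begin

lemma sum_split_mn:
  fixes f :: "nat \<Rightarrow> real"
  shows "(\<Sum>k<m*n. f k) = (\<Sum>i<m. \<Sum>j<n. f (i*n+j))"
proof (induction m)
  case 0 then show ?case by simp
next
  case (Suc m)
  have "(\<Sum>k<Suc m*n. f k) = (\<Sum>k<m*n. f k) + (\<Sum>k\<in>{m*n..<m*n+n}. f k)"
    by (simp add: add.commute sum.atLeastLessThan_concat[symmetric] lessThan_atLeast0)
  also have "(\<Sum>k\<in>{m*n..<m*n+n}. f k) = (\<Sum>j<n. f (m*n+j))"
    by (rule sum.reindex_bij_witness[of _ "\<lambda>j. m*n+j" "\<lambda>k. k - m*n"]) auto
  finally show ?case using Suc by simp
qed

lemma inner:
  fixes X :: "nat \<Rightarrow> nat \<Rightarrow> real"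
  assumes "i < m" "j < n"
  shows "(\<Sum>j'<n. X i' j' * (if i'*n+j' = i*n+j then 1 else 0)) = (if i' = i then X i j else 0)"
proof (cases "i' = i")
  case True
  then have "(\<Sum>j'<n. X i' j' * (if i'*n+j' = i*n+j then 1 else 0)) = (\<Sum>j'<n. if j' = j then X i j else 0)"
    by (intro sum.cong) auto
  then show ?thesis using True assms by simp
next
  case False
  have "\<And>j'. j' < n \<Longrightarrow> i'*n+j' \<noteq> i*n+j"
  proof
    fix j' assume "j' < n" "i'*n+j' = i*n+j"
    then have "(i'*n+j') div n = (i*n+j) div n" by simp
    then show False using \<open>j'<n\<close> assms False by simp
  qed
  then show ?thesis using False by simp
qed

theorem proposition3:
  fixes m n :: nat
  assumes "m \<ge> 1" and "n \<ge> 1"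
  shows "\<exists>(W :: nat \<Rightarrow> nat \<Rightarrow> nat \<Rightarrow> real) (Q :: nat \<Rightarrow> nat \<Rightarrow> real).
           \<forall>X :: nat \<Rightarrow> nat \<Rightarrow> real.
             (\<forall>i<m. \<forall>j<n. X i j \<ge> 0) \<longrightarrow>
             (\<forall>j<n. (\<Sum>i<m. X i j) =
                (\<Sum>k<m*n. Q j k * (MAX i\<in>{..<m}. (\<Sum>j'<n. X i j' * W i j' k))))"
proof (intro exI allI impI)
  fix X :: "nat \<Rightarrow> nat \<Rightarrow> real" and j
  assume X: "\<forall>i<m. \<forall>j<n. X i j \<ge> 0" and j: "j < n"
  define W :: "nat \<Rightarrow> nat \<Rightarrow> nat \<Rightarrow> real" where "W i' j' k = (if k = i'*n+j' then 1 else 0)" for i' j' k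
  define Q :: "nat \<Rightarrow> nat \<Rightarrow> real" where "Q j k = (if k mod n = j then 1 else 0)" for j k
  have mx: "(MAX i'\<in>{..<m}. (\<Sum>j'<n. X i' j' * W i' j' (i*n+jj))) = X i jj"
    if "i < m" "jj < n" for i jj
  proof -
    have e: "(MAX i'\<in>{..<m}. (\<Sum>j'<n. X i' j' * W i' j' (i*n+jj))) =
          (MAX i'\<in>{..<m}. (if i' = i then X i jj else 0))"
      unfolding W_def using inner[OF that, of X] by (intro arg_cong[where f=Max] image_cong) (auto simp: eq_commute)
    have "(MAX i'\<in>{..<m}. (if i' = i then X i jj else 0)) = X i jj"
    proof (rule Max_eqI)
      show "finite ((\<lambda>i'. if i' = i then X i jj else 0) ` {..<m})" by simp
      show "\<And>y. y \<in> (\<lambda>i'. if i' = i then X i jj else 0) ` {..<m} \<Longrightarrow> y \<le> X i jj"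
        using X that by auto
      show "X i jj \<in> (\<lambda>i'. if i' = i then X i jj else 0) ` {..<m}" using that by force
    qed
    then show ?thesis using e by simp
  qed
  have "(\<Sum>k<m*n. Q j k * (MAX i\<in>{..<m}. (\<Sum>j'<n. X i j' * W i j' k)))
     = (\<Sum>i<m. \<Sum>jj<n. Q j (i*n+jj) * (MAX i'\<in>{..<m}. (\<Sum>j'<n. X i' j' * W i' j' (i*n+jj))))"
    by (rule sum_split_mn)
  also have "\<dots> = (\<Sum>i<m. \<Sum>jj<n. if jj = j then X i j else 0)"
    by (intro sum.cong refl) (simp add: mx Q_def)
  also have "\<dots> = (\<Sum>i<m. X i j)" using j by simp
  finally show "(\<Sum>i<m. X i j) = (\<Sum>k<m*n. Q j k * (MAX i\<in>{..<m}. (\<Sum>j'<n. X i j' * W i j' k)))"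
    by simp
qed

end
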